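(* Let $q\ge2$, $t,b\ge1$ and $n\ge bt+1$. For any $\sigma\in\Sigma_q$ and $j\in[0,b-1]$, let $\boldsymbol{Y}^{\sigma,j}_{n,q,b}:=\sigma^j\circ\boldsymbol{X}^{\sigma+1}_{n-j,q,b}$ (with $\sigma+1$ taken modulo $q$). Then \[ |\mathcal{D}_{t,b}(\boldsymbol{Y}^{\sigma,j}_{n,q,b})|=d_{q,b}(n,t)=D_{q,b}(n,t). \]
   Context: $\Sigma_q=\{0,\ldots,q-1\}$; $\sigma^j$ is $j$ copies of $\sigma$ and $\circ$ is concatenation. A $b$-burst-deletion at position $i\in[1,n-b+1]$ transforms $x_1\cdots x_n$ into $x_1\cdots x_{i-1}x_{i+b}\cdots x_n$. For $n\ge tb+1$, $t\ge 0$, $\mathcal{D}_{t,b}(\boldsymbol{x})$ is the set of all length-$(n-tb)$ sequences obtainable from $\boldsymbol{x}$ by $t$ successive $b$-burst-deletions ($\mathcal{D}_{0,b}(\boldsymbol{x})=\{\boldsymbol{x}\}$). $D_{q,b}(n,t)=\max\{|\mathcal{D}_{t,b}(\boldsymbol{x})|:\boldsymbol{x}\in\Sigma_q^n\}$. The $b$-cyclic sequence $\boldsymbol{X}^{\sigma}_{m,q,b}=X_1\cdots X_m$ has $X_i\equiv\sigma+\lfloor (i-1)/b\rfloor\pmod q$. For $m\ge bs+1$, $s\ge0$, $d_{q,b}(m,s):=|\mathcal{D}_{s,b}(\boldsymbol{X}^0_{m,q,b})|$; $d_{q,b}(m,s)=1$ if $m=bs\ge0$, and $d_{q,b}(m,s)=0$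 if $m<bs$ or $s<0$. *)

theory Defs
  imports Main
begin

text \<open>Positions are 0-based here: deleting the burst starting at 0-based index i
  corresponds to the paper's position i+1, with i + b <= length x.\<close>

definition burst_del :: "nat \<Rightarrow> nat \<Rightarrow> nat list \<Rightarrow> nat list" where
  "burst_del b i x = take i x @ drop (i + b) x"

definition burst_step :: "nat \<Rightarrow> nat list \<Rightarrow> nat list set" where
  "burst_step b x = {burst_del b i x | i. i + b \<le> length x}"

fun Dset :: "nat \<Rightarrow> nat \<Rightarrow> nat list \<Rightarrow> nat list set" where
  "Dset 0 b x = {x}"
| "Dset (Suc t) b x = (\<Union>y\<in>Dset t b x. burst_step b y)"

definition seqs :: "nat \<Rightarrow> nat \<Rightarrow> nat list set" where
  "seqs q n = {x. length x = n \<and> set x \<subseteq> {..<q}}"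

definition Dmax :: "nat \<Rightarrow> nat \<Rightarrow> nat \<Rightarrow> nat \<Rightarrow> nat" where
  "Dmax q b n t = Max {card (Dset t b x) | x. x \<in> seqs q n}"

definition Xcyc :: "nat \<Rightarrow> nat \<Rightarrow> nat \<Rightarrow> nat \<Rightarrow> nat list" where
  "Xcyc \<sigma> m q b = map (\<lambda>k. (\<sigma> + k div b) mod q) [0..<m]"

definition dcyc :: "nat \<Rightarrow> nat \<Rightarrow> int \<Rightarrow> int \<Rightarrow> nat" where
  "dcyc q b m s =
     (if s < 0 \<or> m < int b * s then 0
      else if m = int b * s then 1
      else card (Dset (nat s) b (Xcyc 0 (nat m) q b)))"

definition Ycyc :: "nat \<Rightarrow> nat \<Rightarrow> nat \<Rightarrow> nat \<Rightarrow> nat \<Rightarrow> nat list" where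
  "Ycyc \<sigma> j n q b = replicate j \<sigma> @ Xcyc ((\<sigma> + 1) mod q) (n - j) q b"

end

theory Submission
  imports Defs
begin
inductive R :: "nat \<Rightarrow> nat \<Rightarrow> nat list \<Rightarrow> nat list \<Rightarrow> bool" for b where
  refl: "R b 0 x x"
| keep: "R b t x y \<Longrightarrow> R b t (c#x) (c#y)"
| del: "R b t x y \<Longrightarrow> length u = b \<Longrightarrow> R b (Suc t) (u@x) y"

lemma R_len: "R b t x y \<Longrightarrow> length x = length y + t*b"
  by (induction rule: R.induct) auto

lemma R_pre: "R b t x y \<Longrightarrow> R b t (w@x) (w@y)"
  by (induction w) (auto intro: R.keep)

lemma R_blocks: "length a = k*b \<Longrightarrow> R b t x y \<Longrightarrow> R b (k+t) (a@x) y"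
proof (induction k arbitrary: a)
  case 0 then show ?case by simp
next
  case (Suc k)
  have "R b (k+t) (drop b a @ x) y" using Suc by simp
  then have "R b (Suc (k+t)) (take b a @ (drop b a @ x)) y"
    using Suc.prems by (intro R.del) auto
  then have "R b (Suc (k+t)) (a @ x) y" by (simp only: append_assoc[symmetric] append_take_drop_id)
  then show ?case by simp
qed

lemma R_ins: "R b t x y \<Longrightarrow> x = x1@x2 \<Longrightarrow> length u = b \<Longrightarrow> R b (Suc t) (x1@u@x2) y"
proof (induction arbitrary: x1 rule: R.induct)
  case (refl x)
  have "R b (Suc 0) (u@x2) x2" using refl.prems by (intro R.del R.refl) 
  then show ?case using R_pre refl.prems by fastforce
next
  case (keep t x y c)
  show ?case
  proof (cases x1)
    case Nil
    from R.del[OF R.keep[OF keep.hyps(1)] keep.prems(2), of c] show ?thesis using Nil keep.prems by simp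
  next
    case (Cons a x1')
    then have "x = x1' @ x2" "a = c" using keep.prems by auto
    from R.keep[OF keep.IH[OF this(1) keep.prems(2)], of c] show ?thesis using Cons \<open>a = c\<close> by simp
  qed
next
  case (del t x y u')
  show ?case
  proof (cases "length x1 \<ge> b")
    case True
    define x1' where "x1' = drop b x1"
    have "take b (u'@x) = take b (x1@x2)" using del.prems by simp
    then have "take b x1 = u'" using del.hyps True by simp
    then have x1: "x1 = u' @ x1'" unfolding x1'_def by (metis append_take_drop_id)
    then have "x = x1' @ x2" using del.prems by simp
    from del.IH[OF this del.prems(2)] have "R b (Suc t) (x1' @ u @ x2) y" .
    then show ?thesis using x1 del.hyps by (metis R.del append.assoc)
  next
    case False
    define v where "v = drop (length x1) u'"
    have e: "u' @ x = x1 @ x2" using del.prems by simp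
    have "take (length x1) (u'@x) = take (length x1) (x1@x2)" using e by simp
    then have "take (length x1) u' = x1" using False del.hyps by simp
    then have v1: "u' = x1 @ v" unfolding v_def by (metis append_take_drop_id)
    then have "x2 = v @ x" using e by simp
    note v = v1 this
    have L: "length (x1 @ u @ v) = 2*b" using v del.hyps del.prems by simp
    have "R b (2 + t) ((x1@u@v) @ x) y"
      by (rule R_blocks[OF L del.hyps(1)])
    then show ?thesis using v by simp
  qed
qed

lemma R_L: "R b t x ms \<Longrightarrow> ms = m@s \<Longrightarrow> length m + length w = b \<Longrightarrow> R b (Suc t) (w@x) s"
proof (induction arbitrary: m w rule: R.induct)
  case (refl x)
  have "R b (Suc 0) ((w@m)@s) s" using refl.prems by (intro R.del R.refl) simp
  then show ?case using refl.prems by simp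
next
  case (keep t x y c)
  show ?case
  proof (cases m)
    case Nil
    then have "length w = b" "s = c # y" using keep.prems by auto
    from R.del[OF R.keep[OF keep.hyps(1)] this(1), of c] show ?thesis using \<open>s = c # y\<close> by simp
  next
    case (Cons a m')
    then have "y = m' @ s" "a = c" using keep.prems by auto
    from keep.IH[OF this(1), of "w@[c]"] keep.prems Cons
    show ?thesis by simp
  qed
next
  case (del t x y u)
  from del.IH[OF del.prems] have "R b (Suc t) (w @ x) s" .
  from R_ins[OF this HOL.refl del.hyps(2)] show ?case by simp
qed

lemma R_M: "R b t x ps \<Longrightarrow> ps = p@m@s \<Longrightarrow> length m = b \<Longrightarrow> R b (Suc t) x (p@s)"
proof (induction arbitrary: p rule: R.induct)
  case (refl x)
  have "R b (Suc 0) (m@s) s" using refl.prems by (intro R.del R.refl)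
  then show ?case using R_pre refl.prems by fastforce
next
  case (keep t x y c)
  show ?case
  proof (cases p)
    case Nil
    show ?thesis
    proof (cases m)
      case Nil
      then have "b = 0" using keep.prems by simp
      from R.del[OF R.keep[OF keep.hyps], of "[]" c] this \<open>p = []\<close> \<open>m = []\<close> keep.prems
      show ?thesis by simp
    next
      case (Cons a m')
      then have m: "m = c # m'" "y = m' @ s" using keep.prems \<open>p = []\<close> by auto
      from R_L[OF keep.hyps m(2), of "[c]"] m keep.prems \<open>p = []\<close> show ?thesis by simp
    qed
  next
    case (Cons a p')
    then have "y = p' @ m @ s" "a = c" using keep.prems by auto
    from R.keep[OF keep.IH[OF this(1) keep.prems(2)], of c] show ?thesis using Cons \<open>a = c\<close> by simp
  qed
next
  case (del t x y u)
  from del.IH[OF del.prems] del.hyps(2) show ?case by (rule R.del)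
qed

lemma Dset_R: "y \<in> Dset t b x \<Longrightarrow> R b t x y"
proof (induction t arbitrary: y)
  case 0 then show ?case by (simp add: R.refl)
next
  case (Suc t)
  then obtain z i where z: "z \<in> Dset t b x" "y = burst_del b i z" "i + b \<le> length z"
    by (auto simp: burst_step_def)
  have d: "drop (i+b) z = drop b (drop i z)" by (simp add: add.commute)
  have "z = take i z @ take b (drop i z) @ drop (i+b) z"
    by (simp only: d append_take_drop_id)
  from R_M[OF Suc.IH[OF z(1)] this] z show ?case
    by (simp add: burst_del_def)
qed

lemma Dset_pre: "y \<in> Dset t b x \<Longrightarrow> w@y \<in> Dset t b (w@x)"
proof (induction t arbitrary: y)
  case 0 then show ?case by simp
next
  case (Suc t)
  then obtain z i where z: "z \<in> Dset t b x" "y = burst_del b i z" "i + b \<le> length z"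
    by (auto simp: burst_step_def)
  have "w @ y = burst_del b (length w + i) (w@z)" using z by (simp add: burst_del_def)
  moreover have "length w + i + b \<le> length (w@z)" using z by simp
  ultimately have "w @ y \<in> burst_step b (w@z)" by (auto simp: burst_step_def)
  then show ?case using Suc.IH[OF z(1)] by auto
qed

lemma Dset_Suc': "Dset (Suc t) b x = (\<Union>z\<in>burst_step b x. Dset t b z)"
proof (induction t)
  case 0 then show ?case by simp
next
  case (Suc t)
  have "Dset (Suc (Suc t)) b x = (\<Union>y\<in>Dset (Suc t) b x. burst_step b y)" by simp
  also have "\<dots> = (\<Union>y\<in>(\<Union>z\<in>burst_step b x. Dset t b z). burst_step b y)" using Suc by simp
  also have "\<dots> = (\<Union>z\<in>burst_step b x. Dset (Suc t) b z)" by simp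
  finally show ?case .
qed

lemma R_Dset: "R b t x y \<Longrightarrow> y \<in> Dset t b x"
proof (induction rule: R.induct)
  case (refl x) then show ?case by simp
next
  case (keep t x y c) then show ?case using Dset_pre[of y t b x "[c]"] by simp
next
  case (del t x y u)
  have "x \<in> burst_step b (u@x)" unfolding burst_step_def burst_del_def using del.hyps
    by (auto intro!: exI[of _ 0])
  then show ?case using del.IH unfolding Dset_Suc' by blast
qed

lemma Dset_eq: "Dset t b x = {y. R b t x y}"
  using Dset_R R_Dset by blast


lemma R_Nil: "R b t x [] \<longleftrightarrow> length x = t*b"
proof
  assume "R b t x []" then show "length x = t*b" using R_len by fastforce
next
  assume "length x = t*b"
  from R_blocks[OF this R.refl[of b "[]"]] show "R b t x []" by simp
qed

lemma R_Cons_D: "R b t x y \<Longrightarrow> y = c # y' \<Longrightarrow>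
   \<exists>k\<le>t. k*b < length x \<and> x!(k*b) = c \<and> R b (t-k) (drop (k*b+1) x) y'"
proof (induction arbitrary: y' rule: R.induct)
  case (refl x)
  then show ?case by (auto intro!: exI[of _ 0] R.refl)
next
  case (keep t x y c')
  then show ?case by (auto intro!: exI[of _ 0])
next
  case (del t x y u)
  from del.IH[OF del.prems] obtain k where k: "k \<le> t" "k*b < length x" "x!(k*b) = c"
    "R b (t-k) (drop (k*b+1) x) y'" by blast
  have "(u@x)!((Suc k)*b) = c" using k del.hyps by (simp add: nth_append add.commute)
  moreover have "drop ((Suc k)*b+1) (u@x) = drop (k*b+1) x" using del.hyps by (simp add: add.commute)
  ultimately show ?case using k del.hyps by (intro exI[of _ "Suc k"]) auto
qed

lemma R_Cons: "R b t x (c#y) \<longleftrightarrow> (\<exists>k\<le>t. k*b < length x \<and> x!(k*b) = c \<and> R b (t-k) (drop (k*b+1) x) y)"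
proof
  assume "R b t x (c#y)" then show "\<exists>k\<le>t. k*b < length x \<and> x!(k*b) = c \<and> R b (t-k) (drop (k*b+1) x) y"
    using R_Cons_D by blast
next
  assume "\<exists>k\<le>t. k*b < length x \<and> x!(k*b) = c \<and> R b (t-k) (drop (k*b+1) x) y"
  then obtain k where k: "k\<le>t" "k*b < length x" "x!(k*b) = c" "R b (t-k) (drop (k*b+1) x) y" by blast
  have x: "x = take (k*b) x @ (x!(k*b)) # drop (k*b+1) x"
    using k(2) by (simp add: id_take_nth_drop)
  have "length (take (k*b) x) = k*b" using k(2) by simp
  from R_blocks[OF this R.keep[OF k(4)]] have "R b (k + (t-k)) (take (k*b) x @ c # drop (k*b+1) x) (c#y)" .
  then show "R b t x (c#y)" using k x by simp
qed

lemma R_mono: assumes "k' \<le> k" "k*b < length x" "R b (t-k) (drop (k*b+1) x) y" "k \<le> t"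
  shows "R b (t-k') (drop (k'*b+1) x) y"
proof -
  have L: "length (take ((k-k')*b) (drop (k'*b+1) x)) = (k-k')*b"
    using assms(1,2) by (simp add: diff_mult_distrib)
  have D: "drop ((k-k')*b) (drop (k'*b+1) x) = drop (k*b+1) x"
    using assms(1) by (simp add: diff_mult_distrib algebra_simps)
  from R_blocks[OF L assms(3)] have "R b ((k-k') + (t-k)) (drop (k'*b+1) x) y"
    using D by (metis append_take_drop_id)
  then show ?thesis using assms by simp
qed

definition firsts :: "nat \<Rightarrow> nat \<Rightarrow> nat list \<Rightarrow> nat set" where
  "firsts b t x = {k. k \<le> t \<and> k*b < length x \<and> (\<forall>k'<k. x!(k'*b) \<noteq> x!(k*b))}"

lemma Dset_decomp: "Dset t b x = (if length x = t*b then {[]} else {}) \<union>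
   (\<Union>k\<in>firsts b t x. (#) (x!(k*b)) ` Dset (t-k) b (drop (k*b+1) x))"
proof (rule set_eqI)
  fix y
  show "y \<in> Dset t b x \<longleftrightarrow> y \<in> (if length x = t*b then {[]} else {}) \<union>
   (\<Union>k\<in>firsts b t x. (#) (x!(k*b)) ` Dset (t-k) b (drop (k*b+1) x))"
  proof (cases y)
    case Nil
    then show ?thesis by (auto simp: Dset_eq R_Nil)
  next
    case (Cons c y')
    show ?thesis
    proof
      assume "y \<in> Dset t b x"
      then have "R b t x (c#y')" using Cons by (simp add: Dset_eq)
      then obtain k where k: "k\<le>t" "k*b < length x" "x!(k*b) = c" "R b (t-k) (drop (k*b+1) x) y'"
        using R_Cons by blast
      define P where "P = (\<lambda>k. k\<le>t \<and> k*b < length x \<and> x!(k*b) = c)"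
      have Pk: "P k" using k P_def by simp
      define k0 where "k0 = (LEAST k. P k)"
      have P0: "P k0" unfolding k0_def by (rule LeastI[of P, OF Pk])
      have le: "k0 \<le> k" unfolding k0_def by (rule Least_le[of P, OF Pk])
      have nP: "\<And>k'. k' < k0 \<Longrightarrow> \<not> P k'" unfolding k0_def by (rule not_less_Least[of _ P])
      have "k0 \<in> firsts b t x"
        unfolding firsts_def
      proof (safe)
        show "k0 \<le> t" "k0*b < length x" using P0 P_def by auto
        fix k' assume "k' < k0" "x!(k'*b) = x!(k0*b)"
        moreover have "k'*b < length x" using \<open>k' < k0\<close> P0 P_def
          by (meson le_less_trans less_imp_le_nat mult_le_mono1)
        ultimately have "P k'" using P0 P_def by auto
        then show False using nP \<open>k' < k0\<close> by blast
      qed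
      moreover have "R b (t-k0) (drop (k0*b+1) x) y'" using R_mono[OF le k(2) k(4) k(1)] .
      ultimately show "y \<in> (if length x = t*b then {[]} else {}) \<union>
        (\<Union>k\<in>firsts b t x. (#) (x!(k*b)) ` Dset (t-k) b (drop (k*b+1) x))"
        using Cons P0 P_def by (auto simp: Dset_eq)
    next
      assume "y \<in> (if length x = t*b then {[]} else {}) \<union>
        (\<Union>k\<in>firsts b t x. (#) (x!(k*b)) ` Dset (t-k) b (drop (k*b+1) x))"
      then obtain k where k: "k \<in> firsts b t x" "y \<in> (#) (x!(k*b)) ` Dset (t-k) b (drop (k*b+1) x)"
        using Cons by (auto split: if_splits)
      then show "y \<in> Dset t b x" using Cons unfolding Dset_eq firsts_def
        by (auto simp: R_Cons)
    qed
  qed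
qed

lemma Dset_finite: "finite (Dset t b x)"
proof (induction t)
  case 0 then show ?case by simp
next
  case (Suc t)
  have "\<And>y. finite (burst_step b y)"
  proof -
    fix y
    have "burst_step b y \<subseteq> (\<lambda>i. burst_del b i y) ` {..length y}"
      unfolding burst_step_def by auto
    then show "finite (burst_step b y)" by (rule finite_subset) simp
  qed
  then show ?case using Suc by simp
qed

lemma firsts_finite: "finite (firsts b t x)"
  unfolding firsts_def by auto

lemma card_decomp: assumes "length x > t*b"
  shows "card (Dset t b x) = (\<Sum>k\<in>firsts b t x. card (Dset (t-k) b (drop (k*b+1) x)))"
proof -
  have "Dset t b x = (\<Union>k\<in>firsts b t x. (#) (x!(k*b)) ` Dset (t-k) b (drop (k*b+1) x))"
    using Dset_decomp[of t b x] assms by simp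
  also have "card \<dots> = (\<Sum>k\<in>firsts b t x. card ((#) (x!(k*b)) ` Dset (t-k) b (drop (k*b+1) x)))"
  proof (rule card_UN_disjoint)
    show "finite (firsts b t x)" by (rule firsts_finite)
    show "\<forall>i\<in>firsts b t x. finite ((#) (x ! (i * b)) ` Dset (t - i) b (drop (i * b + 1) x))"
      using Dset_finite by blast
    show "\<forall>i\<in>firsts b t x. \<forall>j\<in>firsts b t x. i \<noteq> j \<longrightarrow>
      (#) (x ! (i * b)) ` Dset (t - i) b (drop (i * b + 1) x) \<inter>
      (#) (x ! (j * b)) ` Dset (t - j) b (drop (j * b + 1) x) = {}"
    proof (intro ballI impI)
      fix i j assume ij: "i \<in> firsts b t x" "j \<in> firsts b t x" "i \<noteq> j"
      have "x!(i*b) \<noteq> x!(j*b)"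
      proof (cases "i < j")
        case True then show ?thesis using ij(2) unfolding firsts_def by auto
      next
        case False then have "j < i" using ij(3) by simp
        then show ?thesis using ij(1) unfolding firsts_def by force
      qed
      then show "(#) (x ! (i * b)) ` Dset (t - i) b (drop (i * b + 1) x) \<inter>
      (#) (x ! (j * b)) ` Dset (t - j) b (drop (j * b + 1) x) = {}" by auto
    qed
  qed
  also have "\<dots> = (\<Sum>k\<in>firsts b t x. card (Dset (t-k) b (drop (k*b+1) x)))"
    by (intro sum.cong HOL.refl card_image) (simp add: inj_on_def)
  finally show ?thesis .
qed

lemma card_small: assumes "length x \<le> t*b"
  shows "card (Dset t b x) = (if length x = t*b then 1 else 0)"
proof -
  have "Dset t b x = (if length x = t*b then {[]} else {})"
  proof (rule set_eqI)
    fix y show "y \<in> Dset t b x \<longleftrightarrow> y \<in> (if length x = t*b then {[]} else {})"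
      using assms R_len[of b t x y] by (cases y) (auto simp: Dset_eq R_Nil)
  qed
  then show ?thesis by simp
qed


function G :: "nat \<Rightarrow> nat \<Rightarrow> nat \<Rightarrow> nat \<Rightarrow> nat" where
  "G q b n t = (if n < b*t then 0 else if n = b*t then 1
     else (\<Sum>k\<in>{k. k \<le> t \<and> k < q}. G q b (n - k*b - 1) (t - k)))"
  by pat_completeness auto
termination by (relation "measure (\<lambda>(q,b,n,t). n)") auto

declare G.simps[simp del]

lemma G_small: "n \<le> b*t \<Longrightarrow> G q b n t = (if n = b*t then 1 else 0)"
  by (subst G.simps) auto

lemma G_big: "n > b*t \<Longrightarrow> G q b n t = (\<Sum>k\<in>{k. k \<le> t \<and> k < q}. G q b (n - k*b - 1) (t - k))"
  by (subst G.simps) auto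

lemma Gmono: "b \<ge> 1 \<Longrightarrow> G q b m s \<le> G q b (m+b) (Suc s)"
proof (induction m arbitrary: s rule: less_induct)
  case (less m)
  show ?case
  proof (cases "m \<le> b*s")
    case True
    then show ?thesis by (cases "m = b*s") (auto simp: G_small)
  next
    case False
    then have gt: "m > b*s" by simp
    have fin: "finite {k. k \<le> Suc s \<and> k < q}" by simp
    have "G q b m s = (\<Sum>k\<in>{k. k \<le> s \<and> k < q}. G q b (m - k*b - 1) (s - k))"
      using gt by (rule G_big)
    also have "\<dots> \<le> (\<Sum>k\<in>{k. k \<le> s \<and> k < q}. G q b (m + b - k*b - 1) (Suc s - k))"
    proof (rule sum_mono)
      fix k assume "k \<in> {k. k \<le> s \<and> k < q}"
      then have k: "k \<le> s" by simp
      have kb: "k*b \<le> b*s" using k by (simp add: mult.commute)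
      have "k*b < m" using kb gt by linarith
      then have e1: "m + b - k*b - 1 = (m - k*b - 1) + b" by linarith
      have e2: "Suc s - k = Suc (s - k)" using k by simp
      have "m - k*b - 1 < m" using gt by simp
      from less.IH[OF this less.prems, of "s-k"] show "G q b (m - k*b - 1) (s - k) \<le> G q b (m + b - k*b - 1) (Suc s - k)"
        using e1 e2 by simp
    qed
    also have "\<dots> \<le> (\<Sum>k\<in>{k. k \<le> Suc s \<and> k < q}. G q b (m + b - k*b - 1) (Suc s - k))"
      by (rule sum_mono2[OF fin]) auto
    also have "\<dots> = G q b (m+b) (Suc s)"
      using gt by (subst G_big[of _ _ "m+b"]) auto
    finally show ?thesis .
  qed
qed

lemma G_anti_d: assumes "b \<ge> 1" "n > t*b" "i + d \<le> t"
  shows "G q b (n - (i+d)*b - 1) (t-(i+d)) \<le> G q b (n - i*b - 1) (t-i)"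
  using assms(3)
proof (induction d)
  case 0 then show ?case by simp
next
  case (Suc d)
  define j where "j = i + d"
  have jt: "Suc j \<le> t" using Suc.prems j_def by simp
  have jb: "Suc j * b \<le> t * b" using jt by (rule mult_le_mono1)
  have e1: "(n - Suc j * b - 1) + b = n - j*b - 1" using jb assms(2) by simp
  have e2: "Suc (t - Suc j) = t - j" using jt by simp
  have "G q b (n - Suc j * b - 1) (t - Suc j) \<le> G q b ((n - Suc j * b - 1) + b) (Suc (t - Suc j))"
    by (rule Gmono[OF assms(1)])
  also have "\<dots> = G q b (n - j*b - 1) (t - j)" using e1 e2 by simp
  also have "\<dots> \<le> G q b (n - i*b - 1) (t-i)" using Suc j_def by simp
  finally show ?case using j_def by simp
qed

lemma G_anti: assumes "b \<ge> 1" "n > t*b" "i \<le> j" "j \<le> t"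
  shows "G q b (n - j*b - 1) (t-j) \<le> G q b (n - i*b - 1) (t-i)"
  using G_anti_d[OF assms(1,2), of i "j-i" q] assms(3,4) by simp

lemma sum_antitone: "finite K \<Longrightarrow> (\<And>i j. i \<le> j \<Longrightarrow> f j \<le> f i) \<Longrightarrow> (\<Sum>k\<in>K. f k) \<le> (\<Sum>i<card K. (f i :: nat))"
proof (induction "card K" arbitrary: K)
  case 0 then show ?case by simp
next
  case (Suc n)
  then have ne: "K \<noteq> {}" by auto
  define M where "M = Max K"
  have MK: "M \<in> K" using Suc.prems ne M_def by simp
  have "K \<subseteq> {..M}" using Suc.prems M_def by auto
  then have "card K \<le> Suc M" using card_mono[of "{..M}" K] by simp
  then have nM: "n \<le> M" using Suc.hyps by simp
  have c: "n = card (K - {M})" using Suc.hyps MK Suc.prems by simp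
  have "(\<Sum>k\<in>K. f k) = f M + (\<Sum>k\<in>K - {M}. f k)"
    using MK Suc.prems by (simp add: sum.remove)
  also have "\<dots> \<le> f n + (\<Sum>i<n. f i)"
    using Suc.hyps(1)[OF c] Suc.prems nM by (intro add_mono) (auto simp: c[symmetric])
  also have "\<dots> = (\<Sum>i<card K. f i)" using Suc.hyps(2)[symmetric] by simp
  finally show ?case .
qed

lemma upper: "b \<ge> 1 \<Longrightarrow> set x \<subseteq> {..<q} \<Longrightarrow> card (Dset t b x) \<le> G q b (length x) t"
proof (induction "length x" arbitrary: x t rule: less_induct)
  case less
  define n where "n = length x"
  show ?case
  proof (cases "n \<le> t*b")
    case True
    then show ?thesis using card_small[of x t b] G_small[of n b t q] n_def
      by (simp add: mult.commute)
  next
    case False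
    then have gt: "n > t*b" by simp
    define F where "F = firsts b t x"
    define f where "f = (\<lambda>k. if k \<le> t then G q b (n - k*b - 1) (t-k) else 0)"
    have finF: "finite F" unfolding F_def by (rule firsts_finite)
    have "card (Dset t b x) = (\<Sum>k\<in>F. card (Dset (t-k) b (drop (k*b+1) x)))"
      using card_decomp gt n_def F_def by simp
    also have "\<dots> \<le> (\<Sum>k\<in>F. f k)"
    proof (rule sum_mono)
      fix k assume kF: "k \<in> F"
      then have k: "k \<le> t" "k*b < n" unfolding F_def firsts_def n_def by auto
      have L: "length (drop (k*b+1) x) < length x" using k n_def by simp
      have S: "set (drop (k*b+1) x) \<subseteq> {..<q}" using less.prems(2) set_drop_subset by (metis subset_trans)
      have "card (Dset (t-k) b (drop (k*b+1) x)) \<le> G q b (length (drop (k*b+1) x)) (t-k)"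
        by (rule less.hyps[OF L less.prems(1) S])
      then show "card (Dset (t-k) b (drop (k*b+1) x)) \<le> f k" using k n_def f_def by simp
    qed
    also have "\<dots> \<le> (\<Sum>i<card F. f i)"
    proof (rule sum_antitone[OF finF])
      fix i j :: nat assume ij: "i \<le> j"
      show "f j \<le> f i"
      proof (cases "j \<le> t")
        case True
        then show ?thesis using G_anti[OF less.prems(1) gt ij True] ij f_def by simp
      next
        case False then show ?thesis unfolding f_def by simp
      qed
    qed
    also have "\<dots> \<le> (\<Sum>k\<in>{k. k \<le> t \<and> k < q}. f k)"
    proof (rule sum_mono2)
      have "inj_on (\<lambda>k. x!(k*b)) F"
      proof (rule inj_onI)
        fix i j assume ij: "i \<in> F" "j \<in> F" "x!(i*b) = x!(j*b)"
        show "i = j"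
        proof (rule ccontr)
          assume "i \<noteq> j"
          then have "i < j \<or> j < i" by auto
          then show False using ij unfolding F_def firsts_def by (metis (mono_tags, lifting) mem_Collect_eq)
        qed
      qed
      moreover have "(\<lambda>k. x!(k*b)) ` F \<subseteq> {..<q}"
        using less.prems(2) unfolding F_def firsts_def by (auto dest!: nth_mem)
      ultimately have "card F \<le> q"
        by (metis card_image card_lessThan card_mono finite_lessThan)
      moreover have "card F \<le> Suc t"
        using card_mono[of "{..t}" F] unfolding F_def firsts_def by auto
      ultimately show "{..<card F} \<subseteq> {k. k \<le> t \<and> k < q}" by auto
    qed auto
    also have "\<dots> = (\<Sum>k\<in>{k. k \<le> t \<and> k < q}. G q b (n - k*b - 1) (t - k))"
      unfolding f_def by (rule sum.cong) auto
    also have "\<dots> = G q b n t" using gt by (subst G_big) (auto simp: mult.commute)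
    finally show ?thesis using n_def by simp
  qed
qed


definition W :: "nat \<Rightarrow> nat \<Rightarrow> nat \<Rightarrow> nat \<Rightarrow> nat \<Rightarrow> nat list" where
  "W q b \<sigma> j n = map (\<lambda>i. (\<sigma> + (i + b - j) div b) mod q) [0..<n]"

lemma W_len[simp]: "length (W q b \<sigma> j n) = n"
  by (simp add: W_def)

lemma W_nth: "i < n \<Longrightarrow> W q b \<sigma> j n ! i = (\<sigma> + (i + b - j) div b) mod q"
  by (simp add: W_def)

lemma W_head: assumes "j \<le> b" "b \<ge> 1" "k*b < n"
  shows "W q b \<sigma> j n ! (k*b) = (\<sigma> + (if j = 0 then 1 else 0) + k) mod q"
proof -
  have "(k*b + b - j) div b = k + (b - j) div b" using assms(1,2)
    by (metis Nat.add_diff_assoc add.commute div_mult_self1 not_one_le_zero)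
  moreover have "(b - j) div b = (if j = 0 then 1 else 0)" using assms(1,2) by auto
  ultimately show ?thesis using W_nth[OF assms(3)] by simp
qed

lemma W_drop: assumes "j \<le> b" "b \<ge> 1"
  shows "drop (k*b+1) (W q b \<sigma> j n) = (if j = 0 then W q b (\<sigma>+k+1) (b-1) (n-k*b-1) else W q b (\<sigma>+k) (j-1) (n-k*b-1))"
proof (rule nth_equalityI)
  show "length (drop (k*b+1) (W q b \<sigma> j n)) = length (if j = 0 then W q b (\<sigma>+k+1) (b-1) (n-k*b-1) else W q b (\<sigma>+k) (j-1) (n-k*b-1))"
    by simp
  fix i assume "i < length (drop (k*b+1) (W q b \<sigma> j n))"
  then have i: "i < n - k*b - 1" by simp
  have lhs: "drop (k*b+1) (W q b \<sigma> j n) ! i = (\<sigma> + (i + (k*b+1) + b - j) div b) mod q"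
    using i by (simp add: W_nth add.commute)
  show "drop (k*b+1) (W q b \<sigma> j n) ! i = (if j = 0 then W q b (\<sigma>+k+1) (b-1) (n-k*b-1) else W q b (\<sigma>+k) (j-1) (n-k*b-1)) ! i"
  proof (cases "j = 0")
    case True
    have e: "i + (k*b+1) + b - j = (i+1) + (Suc k)*b" using True by simp
    have g: "i + b - (b - 1) = i + 1" using assms(2) by simp
    have f: "((i+1) + Suc k * b) div b = Suc k + (i+1) div b" using assms(2) by (intro div_mult_self1) simp
    have "(i + (k*b+1) + b - j) div b = Suc k + (i + b - (b - 1)) div b"
      unfolding e g by (rule f)
    then show ?thesis using lhs True i by (simp add: W_nth add.assoc)
  next
    case False
    have e: "i + (k*b+1) + b - j = (i + b - (j-1)) + k*b" using False assms by simp
    have f: "((i + b - (j-1)) + k*b) div b = k + (i + b - (j-1)) div b" using assms(2) by (intro div_mult_self1) simp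
    have "(i + (k*b+1) + b - j) div b = k + (i + b - (j - 1)) div b"
      unfolding e by (rule f)
    then show ?thesis using lhs False i by (simp add: W_nth add.assoc)
  qed
qed

lemma mod_distinct: assumes "k' < k" "(c + k') mod q = (c + k) mod (q::nat)" shows "q \<le> k"
proof -
  have "c + k' \<le> c + k" using assms(1) by simp
  from mod_eq_dvd_iff_nat[OF this] assms(2) have "q dvd k - k'" by (simp add: eq_commute)
  then have "q \<le> k - k'" using assms(1) by (simp add: dvd_imp_le)
  then show ?thesis by simp
qed

lemma firsts_W: assumes "b \<ge> 1" "j \<le> b" "n > t*b" "q \<ge> 1"
  shows "firsts b t (W q b \<sigma> j n) = {k. k \<le> t \<and> k < q}"
proof -
  define c where "c = \<sigma> + (if j = 0 then 1 else 0)"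
  have kb: "\<And>k. k \<le> t \<Longrightarrow> k*b < n" using assms(3)
    by (meson le_less_trans mult_le_mono1)
  have hd: "\<And>k. k \<le> t \<Longrightarrow> W q b \<sigma> j n ! (k*b) = (c + k) mod q"
    using W_head[OF assms(2,1) kb] c_def by simp
  show ?thesis
  proof (rule set_eqI)
    fix k
    show "k \<in> firsts b t (W q b \<sigma> j n) \<longleftrightarrow> k \<in> {k. k \<le> t \<and> k < q}"
    proof
      assume k: "k \<in> firsts b t (W q b \<sigma> j n)"
      then have kt: "k \<le> t" and nd: "\<forall>k'<k. W q b \<sigma> j n ! (k'*b) \<noteq> W q b \<sigma> j n ! (k*b)"
        unfolding firsts_def by auto
      show "k \<in> {k. k \<le> t \<and> k < q}"
      proof (rule ccontr)
        assume "k \<notin> {k. k \<le> t \<and> k < q}"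
        then have "q \<le> k" using kt by simp
        then have "k - q < k" "k - q \<le> t" using assms(4) kt by auto
        moreover have "c + k = (c + (k - q)) + q" using \<open>q \<le> k\<close> by simp
        then have "(c + (k - q)) mod q = (c + k) mod q" by (simp only: mod_add_self2)
        ultimately have "W q b \<sigma> j n ! ((k-q)*b) = W q b \<sigma> j n ! (k*b)" using hd kt by simp
        then show False using nd \<open>k - q < k\<close> by blast
      qed
    next
      assume "k \<in> {k. k \<le> t \<and> k < q}"
      then have k: "k \<le> t" "k < q" by auto
      show "k \<in> firsts b t (W q b \<sigma> j n)"
        unfolding firsts_def
      proof (safe)
        show "k \<le> t" "k*b < length (W q b \<sigma> j n)" using k kb by auto
        fix k' assume "k' < k" "W q b \<sigma> j n ! (k'*b) = W q b \<sigma> j n ! (k*b)"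
        then have "(c + k') mod q = (c + k) mod q" using hd k by simp
        from mod_distinct[OF \<open>k' < k\<close> this] k show False by simp
      qed
    qed
  qed
qed

lemma exact: "b \<ge> 1 \<Longrightarrow> q \<ge> 1 \<Longrightarrow> j \<le> b \<Longrightarrow> card (Dset t b (W q b \<sigma> j n)) = G q b n t"
proof (induction n arbitrary: \<sigma> j t rule: less_induct)
  case (less n)
  show ?case
  proof (cases "n \<le> t*b")
    case True
    then show ?thesis using card_small[of "W q b \<sigma> j n" t b] G_small[of n b t q]
      by (simp add: mult.commute)
  next
    case False
    then have gt: "n > t*b" by simp
    have "card (Dset t b (W q b \<sigma> j n)) = (\<Sum>k\<in>firsts b t (W q b \<sigma> j n). card (Dset (t-k) b (drop (k*b+1) (W q b \<sigma> j n))))"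
      using card_decomp gt by simp
    also have "\<dots> = (\<Sum>k\<in>{k. k \<le> t \<and> k < q}. card (Dset (t-k) b (drop (k*b+1) (W q b \<sigma> j n))))"
      using firsts_W[OF less.prems(1,3) gt less.prems(2)] by simp
    also have "\<dots> = (\<Sum>k\<in>{k. k \<le> t \<and> k < q}. G q b (n - k*b - 1) (t - k))"
    proof (rule sum.cong[OF HOL.refl])
      fix k assume "k \<in> {k. k \<le> t \<and> k < q}"
      then have "k*b \<le> t*b" by simp
      then have lt: "n - k*b - 1 < n" using gt by simp
      show "card (Dset (t-k) b (drop (k*b+1) (W q b \<sigma> j n))) = G q b (n - k*b - 1) (t - k)"
      proof (cases "j = 0")
        case True
        then show ?thesis using W_drop[OF less.prems(3,1), of k q \<sigma> n]
          less.IH[OF lt less.prems(1,2), where j="b-1" and \<sigma>="\<sigma>+k+1" and t="t-k"] by simp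
      next
        case False
        then show ?thesis using W_drop[OF less.prems(3,1), of k q \<sigma> n]
          less.IH[OF lt less.prems(1,2), where j="j-1" and \<sigma>="\<sigma>+k" and t="t-k"] less.prems(3) by simp
      qed
    qed
    also have "\<dots> = G q b n t" using gt by (subst G_big) (auto simp: mult.commute)
    finally show ?thesis .
  qed
qed

theorem theorem4p9:
  fixes q t b n \<sigma> j :: nat
  assumes "q \<ge> 2" and "t \<ge> 1" and "b \<ge> 1" and "n \<ge> b * t + 1"
    and "\<sigma> < q" and "j \<le> b - 1"
  shows "card (Dset t b (Ycyc \<sigma> j n q b)) = dcyc q b (int n) (int t)
       \<and> dcyc q b (int n) (int t) = Dmax q b n t"
proof -
  have q1: "q \<ge> 1" using assms(1) by simp
  have jb: "j \<le> b" using assms(6) by simp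
  have "b \<le> b*t" using assms(2) by simp
  then have jn: "j \<le> n" using assms(4,6) by linarith
  have Y: "Ycyc \<sigma> j n q b = W q b \<sigma> j n"
  proof (rule nth_equalityI)
    show "length (Ycyc \<sigma> j n q b) = length (W q b \<sigma> j n)" using jn by (simp add: Ycyc_def Xcyc_def)
    fix i assume "i < length (Ycyc \<sigma> j n q b)"
    then have i: "i < n" using jn by (simp add: Ycyc_def Xcyc_def)
    show "Ycyc \<sigma> j n q b ! i = W q b \<sigma> j n ! i"
    proof (cases "i < j")
      case True
      then have "(i + b - j) div b = 0" using assms(3) jb by simp
      then show ?thesis using True i assms(5) by (simp add: Ycyc_def W_nth nth_append)
    next
      case False
      have e: "i + b - j = (i - j) + 1*b" using False jb by simp
      have f: "((i - j) + 1*b) div b = 1 + (i - j) div b" using assms(3) by (intro div_mult_self1) simp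
      have "(i + b - j) div b = 1 + (i - j) div b" unfolding e by (rule f)
      then have "W q b \<sigma> j n ! i = (\<sigma> + 1 + (i - j) div b) mod q" using i by (simp add: W_nth)
      also have "\<dots> = ((\<sigma> + 1) mod q + (i - j) div b) mod q" by (simp add: mod_add_left_eq)
      moreover have "i - j < n - j" using False i by simp
      ultimately show ?thesis using False i by (simp add: Ycyc_def Xcyc_def nth_append)
    qed
  qed
  have X: "Xcyc 0 n q b = W q b 0 b n"
    by (rule nth_equalityI) (auto simp: Xcyc_def W_nth)
  have gt: "n > t*b" using assms(4) by (simp add: mult.commute)
  have d: "dcyc q b (int n) (int t) = card (Dset t b (Xcyc 0 n q b))"
    using gt unfolding dcyc_def by (auto simp: mult.commute simp flip: of_nat_mult)
  have dG: "dcyc q b (int n) (int t) = G q b n t"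
    using d X exact[OF assms(3) q1, of b t 0 n] by simp
  have yG: "card (Dset t b (Ycyc \<sigma> j n q b)) = G q b n t"
    using Y exact[OF assms(3) q1 jb] by simp
  define S where "S = {card (Dset t b x) | x. x \<in> seqs q n}"
  have ub: "\<And>s. s \<in> S \<Longrightarrow> s \<le> G q b n t"
    using upper[OF assms(3)] unfolding S_def seqs_def by fastforce
  have "Xcyc 0 n q b \<in> seqs q n" unfolding seqs_def Xcyc_def using q1 by auto
  then have inS: "G q b n t \<in> S" unfolding S_def using d dG by auto
  have finS: "finite S" using ub by (meson finite_atMost finite_subset atMost_iff subsetI)
  have "Dmax q b n t = G q b n t"
    unfolding Dmax_def S_def[symmetric] by (rule Max_eqI[OF finS ub inS])
  then show ?thesis using dG yG by simp
qed

end
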